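(* Let $0\to\mathfrak{r}\to\mathfrak{f}\xrightarrow{\rho}\mathfrak{g}\to0$ be a free presentation of a Leibniz algebra $\mathfrak{g}$ and let $0\to\mathfrak{m}\to\mathfrak{p}\xrightarrow{\psi}\mathfrak{q}\to0$ be a $\mathrm{Lie}$-central extension of a Leibniz algebra $\mathfrak{q}$. Then for each homomorphism $\alpha:\mathfrak{g}\to\mathfrak{q}$ there exists a homomorphism $\beta:\mathfrak{f}/[\mathfrak{f},\mathfrak{r}]_{\mathrm{Lie}}\to\mathfrak{p}$ such that $\beta(\mathfrak{r}/[\mathfrak{f},\mathfrak{r}]_{\mathrm{Lie}})\subseteq\mathfrak{m}$ and $\psi\circ\beta=\alpha\circ\overline{\rho}$, where $\overline{\rho}:\mathfrak{f}/[\mathfrak{f},\mathfrak{r}]_{\mathrm{Lie}}\to\mathfrak{g}$ is the epimorphism induced by $\rho$.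
   Context: Fix a field $\mathbb{K}$ with $\frac12\in\mathbb{K}$. A Leibniz algebra is a $\mathbb{K}$-vector space with a bilinear bracket satisfying $[x,[y,z]]=[[x,y],z]-[[x,z],y]$. For two-sided ideals $\mathfrak{m},\mathfrak{n}$, $[\mathfrak{m},\mathfrak{n}]_{\mathrm{Lie}}$ is the subspace spanned by all $[m,n]+[n,m]$. $Z_{\mathrm{Lie}}(\mathfrak{p})=\{z:[x,z]+[z,x]=0\ \forall x\in\mathfrak{p}\}$; a short exact sequence $0\to\mathfrak{m}\to\mathfrak{p}\to\mathfrak{q}\to0$ is a $\mathrm{Lie}$-central extension if $\mathfrak{m}\subseteq Z_{\mathrm{Lie}}(\mathfrak{p})$. A free presentation of $\mathfrak{g}$ is a short exact sequence $0\to\mathfrak{r}\to\mathfrak{f}\to\mathfrak{g}\to0$ with $\mathfrak{f}$ a free Leibniz algebra. *)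

theory Defs
  imports Complex_Main
begin

text \<open>A Leibniz algebra over a field 'k is represented by an abelian group type 'a
  (the whole type is the underlying vector space) together with a scalar
  multiplication sc and a bracket br.\<close>

definition leibniz_algebra ::
  "('k::field \<Rightarrow> 'a::ab_group_add \<Rightarrow> 'a) \<Rightarrow> ('a \<Rightarrow> 'a \<Rightarrow> 'a) \<Rightarrow> bool" where
  "leibniz_algebra sc br \<longleftrightarrow>
     vector_space sc \<and>
     (\<forall>x. Vector_Spaces.linear sc sc (br x)) \<and>
     (\<forall>y. Vector_Spaces.linear sc sc (\<lambda>x. br x y)) \<and>
     (\<forall>x y z. br x (br y z) = br (br x y) z - br (br x z) y)"

definition leibniz_hom ::
  "('k::field \<Rightarrow> 'a::ab_group_add \<Rightarrow> 'a) \<Rightarrow> ('a \<Rightarrow> 'a \<Rightarrow> 'a) \<Rightarrow>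
   ('k \<Rightarrow> 'b::ab_group_add \<Rightarrow> 'b) \<Rightarrow> ('b \<Rightarrow> 'b \<Rightarrow> 'b) \<Rightarrow> ('a \<Rightarrow> 'b) \<Rightarrow> bool" where
  "leibniz_hom sc1 br1 sc2 br2 h \<longleftrightarrow>
     Vector_Spaces.linear sc1 sc2 h \<and> (\<forall>x y. h (br1 x y) = br2 (h x) (h y))"

definition leibniz_ideal ::
  "('k::field \<Rightarrow> 'a::ab_group_add \<Rightarrow> 'a) \<Rightarrow> ('a \<Rightarrow> 'a \<Rightarrow> 'a) \<Rightarrow> 'a set \<Rightarrow> bool" where
  "leibniz_ideal sc br I \<longleftrightarrow>
     module.subspace sc I \<and> (\<forall>x i. i \<in> I \<longrightarrow> br x i \<in> I \<and> br i x \<in> I)"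

definition leibniz_subalgebra ::
  "('k::field \<Rightarrow> 'a::ab_group_add \<Rightarrow> 'a) \<Rightarrow> ('a \<Rightarrow> 'a \<Rightarrow> 'a) \<Rightarrow> 'a set \<Rightarrow> bool" where
  "leibniz_subalgebra sc br S \<longleftrightarrow>
     module.subspace sc S \<and> (\<forall>x\<in>S. \<forall>y\<in>S. br x y \<in> S)"

definition generated_subalgebra ::
  "('k::field \<Rightarrow> 'a::ab_group_add \<Rightarrow> 'a) \<Rightarrow> ('a \<Rightarrow> 'a \<Rightarrow> 'a) \<Rightarrow> 'a set \<Rightarrow> 'a set" where
  "generated_subalgebra sc br X = \<Inter>{S. leibniz_subalgebra sc br S \<and> X \<subseteq> S}"

definition lie_comm ::
  "('k::field \<Rightarrow> 'a::ab_group_add \<Rightarrow> 'a) \<Rightarrow> ('a \<Rightarrow> 'a \<Rightarrow> 'a) \<Rightarrow> 'a set \<Rightarrow> 'a set \<Rightarrow> 'a set" where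
  "lie_comm sc br M N = module.span sc {br m n + br n m | m n. m \<in> M \<and> n \<in> N}"

definition lie_center :: "('a::ab_group_add \<Rightarrow> 'a \<Rightarrow> 'a) \<Rightarrow> 'a set" where
  "lie_center br = {z. \<forall>x. br x z + br z x = 0}"

text \<open>HOL cannot quantify over types inside a formula, so the
  universal property is stated for target algebras carried by the type named
  by the itself-argument.\<close>
definition free_leibniz_on ::
  "('k::field \<Rightarrow> 'a::ab_group_add \<Rightarrow> 'a) \<Rightarrow> ('a \<Rightarrow> 'a \<Rightarrow> 'a) \<Rightarrow> 'a set \<Rightarrow>
   'b::ab_group_add itself \<Rightarrow> bool" where
  "free_leibniz_on sc br X (T :: 'b itself) \<longleftrightarrow>
     leibniz_algebra sc br \<and>
     generated_subalgebra sc br X = UNIV \<and>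
     (\<forall>(sc2 :: 'k \<Rightarrow> 'b \<Rightarrow> 'b) br2 (g :: 'a \<Rightarrow> 'b). leibniz_algebra sc2 br2 \<longrightarrow>
        (\<exists>h. leibniz_hom sc br sc2 br2 h \<and> (\<forall>x\<in>X. h x = g x)))"

end

theory Submission
  imports Defs
begin


lemma lin_add: "Vector_Spaces.linear s1 s2 f \<Longrightarrow> f (a + b) = f a + f b"
  using Vector_Spaces.linear.axioms(3) module_hom.add by metis

lemma lin_scale: "Vector_Spaces.linear s1 s2 f \<Longrightarrow> f (s1 c a) = s2 c (f a)"
  using Vector_Spaces.linear.axioms(3) module_hom.scale by metis

lemma lin_zero: "Vector_Spaces.linear s1 s2 f \<Longrightarrow> f 0 = 0"
  using Vector_Spaces.linear.axioms(3) module_hom.zero by metis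

lemma lin_m1: "Vector_Spaces.linear s1 s2 f \<Longrightarrow> module s1"
  using Vector_Spaces.linear.axioms(3) module_hom.axioms(1) by metis

lemma lin_m2: "Vector_Spaces.linear s1 s2 f \<Longrightarrow> module s2"
  using Vector_Spaces.linear.axioms(3) module_hom.axioms(2) by metis

lemma lin_vs1: "Vector_Spaces.linear s1 s2 f \<Longrightarrow> vector_space s1"
  using Vector_Spaces.linear.axioms(1) by metis

theorem mainTheorem11:
  fixes scF :: "'k::field \<Rightarrow> 'f::ab_group_add \<Rightarrow> 'f" and brF :: "'f \<Rightarrow> 'f \<Rightarrow> 'f"
    and scG :: "'k \<Rightarrow> 'g::ab_group_add \<Rightarrow> 'g" and brG :: "'g \<Rightarrow> 'g \<Rightarrow> 'g"
    and scP :: "'k \<Rightarrow> 'p::ab_group_add \<Rightarrow> 'p" and brP :: "'p \<Rightarrow> 'p \<Rightarrow> 'p"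
    and scQ :: "'k \<Rightarrow> 'q::ab_group_add \<Rightarrow> 'q" and brQ :: "'q \<Rightarrow> 'q \<Rightarrow> 'q"
    and X :: "'f set" and r :: "'f set" and m :: "'p set"
    and \<rho> :: "'f \<Rightarrow> 'g" and \<psi> :: "'p \<Rightarrow> 'q" and \<alpha> :: "'g \<Rightarrow> 'q"
  assumes half: "(2::'k) \<noteq> 0"
    and G: "leibniz_algebra scG brG"
    and P: "leibniz_algebra scP brP"
    and Q: "leibniz_algebra scQ brQ"
    and free: "free_leibniz_on scF brF X TYPE('p)"
    and rho_hom: "leibniz_hom scF brF scG brG \<rho>"
    and rho_surj: "surj \<rho>"
    and r_ker: "r = {x. \<rho> x = 0}"
    and psi_hom: "leibniz_hom scP brP scQ brQ \<psi>"
    and psi_surj: "surj \<psi>"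
    and m_ker: "m = {x. \<psi> x = 0}"
    and m_central: "m \<subseteq> lie_center brP"
    and alpha_hom: "leibniz_hom scG brG scQ brQ \<alpha>"
  shows "\<exists>\<beta> :: 'f \<Rightarrow> 'p.
           leibniz_hom scF brF scP brP \<beta> \<and>
           (\<forall>x\<in>lie_comm scF brF UNIV r. \<beta> x = 0) \<and>
           \<beta> ` r \<subseteq> m \<and>
           (\<forall>x. \<psi> (\<beta> x) = \<alpha> (\<rho> x))"
proof -
  obtain h where hh: "leibniz_hom scF brF scP brP h" and hX: "\<forall>x\<in>X. h x = (SOME p. \<psi> p = \<alpha> (\<rho> x))"
  proof -
    have fr: "\<forall>(sc2 :: 'k \<Rightarrow> 'p \<Rightarrow> 'p) br2 (g :: 'f \<Rightarrow> 'p). leibniz_algebra sc2 br2 \<longrightarrow>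
        (\<exists>h. leibniz_hom scF brF sc2 br2 h \<and> (\<forall>x\<in>X. h x = g x))"
      using free unfolding free_leibniz_on_def by blast
    have "\<exists>h. leibniz_hom scF brF scP brP h \<and> (\<forall>x\<in>X. h x = (\<lambda>x. SOME p. \<psi> p = \<alpha> (\<rho> x)) x)"
      using spec[OF spec[OF spec[OF fr, of scP], of brP], of "\<lambda>x. SOME p. \<psi> p = \<alpha> (\<rho> x)"] P by simp
    then show ?thesis using that by blast
  qed
  have hX': "\<psi> (h x) = \<alpha> (\<rho> x)" if "x \<in> X" for x
  proof -
    obtain p where "\<psi> p = \<alpha> (\<rho> x)" using psi_surj by (metis surjD)
    then show ?thesis using hX that by (metis (mono_tags, lifting) someI_ex)
  qed
  have hl: "Vector_Spaces.linear scF scP h" and hb: "\<And>x y. h (brF x y) = brP (h x) (h y)"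
    using hh unfolding leibniz_hom_def by auto
  have pl: "Vector_Spaces.linear scP scQ \<psi>" and pb: "\<And>x y. \<psi> (brP x y) = brQ (\<psi> x) (\<psi> y)"
    using psi_hom unfolding leibniz_hom_def by auto
  have rl: "Vector_Spaces.linear scF scG \<rho>" and rb: "\<And>x y. \<rho> (brF x y) = brG (\<rho> x) (\<rho> y)"
    using rho_hom unfolding leibniz_hom_def by auto
  have al: "Vector_Spaces.linear scG scQ \<alpha>" and ab: "\<And>x y. \<alpha> (brG x y) = brQ (\<alpha> x) (\<alpha> y)"
    using alpha_hom unfolding leibniz_hom_def by auto
  define E where "E = {x. \<psi> (h x) = \<alpha> (\<rho> x)}"
  have "leibniz_subalgebra scF brF E"
    unfolding leibniz_subalgebra_def module.subspace_def[OF lin_m1[OF hl]]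
    by (auto simp: E_def lin_add[OF hl] lin_add[OF pl] lin_add[OF rl] lin_add[OF al]
        lin_scale[OF hl] lin_scale[OF pl] lin_scale[OF rl] lin_scale[OF al]
        lin_zero[OF hl] lin_zero[OF pl] lin_zero[OF rl] lin_zero[OF al] hb pb rb ab)
  moreover have "X \<subseteq> E" using hX' by (auto simp: E_def)
  ultimately have "generated_subalgebra scF brF X \<subseteq> E"
    unfolding generated_subalgebra_def by blast
  then have comm: "\<And>x. \<psi> (h x) = \<alpha> (\<rho> x)"
    using free unfolding free_leibniz_on_def E_def by auto
  have hr: "h ` r \<subseteq> m"
    using comm lin_zero[OF al] by (auto simp: r_ker m_ker)
  have "lie_comm scF brF UNIV r \<subseteq> {x. h x = 0}"
    unfolding lie_comm_def
  proof (rule module.span_minimal[OF lin_m1[OF hl]])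
    show "{brF a n + brF n a |a n. a \<in> UNIV \<and> n \<in> r} \<subseteq> {x. h x = 0}"
    proof clarsimp
      fix a n assume "n \<in> r"
      then have "h n \<in> lie_center brP" using hr m_central by auto
      then show "h (brF a n + brF n a) = 0"
        by (simp add: lin_add[OF hl] hb lie_center_def)
    qed
    show "module.subspace scF {x. h x = 0}"
      unfolding module.subspace_def[OF lin_m1[OF hl]]
      by (auto simp: lin_add[OF hl] lin_scale[OF hl] lin_zero[OF hl]
          lin_m2[OF hl] module.scale_zero_right)
  qed
  then show ?thesis using hh hr comm by blast
qed

end
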